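(* Let $S\subseteq X$, $\psi:S\to Z$ be $C$-convex, $x_0\in S$, $f=\psi^C$, and write $x_t=x_0+t(x-x_0)$. Suppose that for all $x\in S$ and $t\in(0,1)$, $$\psi(x_t)\ne\psi(x_0)\ \Longrightarrow\ \psi'(x_t,x_0-x)\not\subseteq C\cup C_\infty .$$ Then $x_0$ solves the set-valued Minty inequality for $f$ (for all $x\in X$ with $f(x)\ne f(x_0)$: $f'(x,x_0-x)\not\subseteq0^+f(x)$), and for all $x\in S$, $t\in(0,1)$: $$\psi(x_t)\neq\psi(x_0)\ \Longrightarrow\ \psi'(x_t,x_0-x)\subseteq (C\cap-C)_\infty\cup(Z\setminus C).$$
   Context: $X$ real linear space, $Z$ real locally convex Hausdorff space with dual $Z^*$, $C\subseteq Z$ closed convex cone, $0\in C$, $C^-=\{z^*:z^*(c)\le0\ \forall c\in C\}$, $C^-\setminus\{0\}\ne\emptyset$. $\psi:S\to Z$ is $C$-convex if $S$ is convex and $(1-t)\psi(x_1)+t\psi(x_2)\in\psi(x_1+t(x_2-x_1))+C$ for $x_1,x_2\in S$, $t\in(0,1)$. $f=\psi^C$: $f(x)=\psi(x)+C$ for $x\in S$, $\emptyset$ otherwise. $A\ominus B=\{z:B+\{z\}\subseteq A\}$; $0^+A=\{z:A+\{z\}\subseteq A\}$ for $A\ne\emptyset$, $0^+\emptyset=\emptyset$; $f'(x,u)=\bigcap_{t_0>0}\operatorname{cl}\operatorname{co}\bigcup_{0<t<t_0}\frac1t(f(x+tu)\ominus f(x))$. Extended space: for $z\in Z$, $z_\infty$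 denotes an infinite element in direction $z$, with $z_\infty=y_\infty$ iff $y=\lambda z$ for some $\lambda>0$, and $0_\infty=0$; $\tilde Z=Z\cup\{z_\infty:z\in Z\}$; for $A\subseteq Z$, $A_\infty=\{a_\infty:a\in A\setminus\{0\}\}$, $\operatorname{cone}A=\{ta:a\in A,t>0\}$. Topology on $\tilde Z$: for $z\in Z$, neighborhood base $\{z+U\}$ with $U$ ranging over closed convex balanced $0$-neighborhoods of $Z$; for $z\ne0$, neighborhood base of $z_\infty$: $(\{tz\}+\operatorname{cone}(U+\{z\}))\cup(U+\{z\})_\infty$, $t>0$, $U$ as before. Dini derivative: $\psi'(y,v)=\{\tilde z\in\tilde Z:\exists t_i\downarrow0 \text{ with } \frac1{t_i}(\psi(y+t_iv)-\psi(y))\to\tilde z\text{ in }\tilde Z\}$. *)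

theory Defs
  imports "HOL-Analysis.Analysis"
begin

(* Locally convex topological vector space structure on the type 'z
   (Hausdorffness is imposed separately through the class t2_space). *)
definition lctvs :: "'z::{real_vector,topological_space} itself \<Rightarrow> bool" where
  "lctvs _ \<longleftrightarrow>
     continuous_on UNIV (\<lambda>p::'z \<times> 'z. fst p + snd p) \<and>
     continuous_on UNIV (\<lambda>p::real \<times> 'z. fst p *\<^sub>R snd p) \<and>
     (\<forall>U::'z set. open U \<and> 0 \<in> U \<longrightarrow> (\<exists>V. open V \<and> convex V \<and> 0 \<in> V \<and> V \<subseteq> U))"

definition dual_space :: "('z::{real_vector,topological_space} \<Rightarrow> real) set" where
  "dual_space = {l. linear l \<and> continuous_on UNIV l}"

definition neg_polar :: "'z::{real_vector,topological_space} set \<Rightarrow> ('z \<Rightarrow> real) set" where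
  "neg_polar C = {l \<in> dual_space. \<forall>c\<in>C. l c \<le> 0}"

definition C_convex :: "'z::real_vector set \<Rightarrow> 'x::real_vector set \<Rightarrow> ('x \<Rightarrow> 'z) \<Rightarrow> bool" where
  "C_convex C S \<psi> \<longleftrightarrow> convex S \<and>
     (\<forall>x1\<in>S. \<forall>x2\<in>S. \<forall>t::real. 0 < t \<and> t < 1 \<longrightarrow>
        (1 - t) *\<^sub>R \<psi> x1 + t *\<^sub>R \<psi> x2 \<in> {\<psi> (x1 + t *\<^sub>R (x2 - x1)) + c | c. c \<in> C})"

definition psiC :: "'z::real_vector set \<Rightarrow> 'x set \<Rightarrow> ('x \<Rightarrow> 'z) \<Rightarrow> 'x \<Rightarrow> 'z set" where
  "psiC C S \<psi> x = (if x \<in> S then {\<psi> x + c | c. c \<in> C} else {})"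

definition mdiff :: "'z::real_vector set \<Rightarrow> 'z set \<Rightarrow> 'z set" where
  "mdiff A B = {z. (\<lambda>b. b + z) ` B \<subseteq> A}"

definition rec_cone :: "'z::real_vector set \<Rightarrow> 'z set" where
  "rec_cone A = (if A = {} then {} else {z. (\<lambda>a. a + z) ` A \<subseteq> A})"

definition sv_deriv :: "('x::real_vector \<Rightarrow> 'z::{real_vector,topological_space} set) \<Rightarrow> 'x \<Rightarrow> 'x \<Rightarrow> 'z set" where
  "sv_deriv f x u = (\<Inter>t0\<in>{t0::real. 0 < t0}.
      closure (convex hull (\<Union>t\<in>{t. 0 < t \<and> t < t0}. (\<lambda>z. (1 / t) *\<^sub>R z) ` mdiff (f (x + t *\<^sub>R u)) (f x))))"

definition minty_sol :: "('x::real_vector \<Rightarrow> 'z::{real_vector,topological_space} set) \<Rightarrow> 'x \<Rightarrow> bool" where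
  "minty_sol f x0 \<longleftrightarrow> (\<forall>x. f x \<noteq> f x0 \<longrightarrow> \<not> sv_deriv f x (x0 - x) \<subseteq> rec_cone (f x))"

(* Extended space: Fin z is the point z of Z, Dir z (z \<noteq> 0) is the infinite
   element z_\<infinity>.  Dir z and Dir (\<lambda> z) (\<lambda> > 0) represent the same element;
   all sets of extended elements used below are closed under this identification. *)
datatype 'z ext = Fin 'z | Dir 'z

definition ccb_nhd :: "'z::{real_vector,topological_space} set \<Rightarrow> bool" where
  "ccb_nhd U \<longleftrightarrow> (\<exists>V. open V \<and> 0 \<in> V \<and> V \<subseteq> U) \<and> closed U \<and> convex U \<and>
     (\<forall>a::real. \<bar>a\<bar> \<le> 1 \<longrightarrow> (\<lambda>u. a *\<^sub>R u) ` U \<subseteq> U)"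

definition pos_cone :: "'z::real_vector set \<Rightarrow> 'z set" where
  "pos_cone A = {t *\<^sub>R a | t a. t > 0 \<and> a \<in> A}"

definition ext_conv :: "(nat \<Rightarrow> 'z::{real_vector,topological_space}) \<Rightarrow> 'z ext \<Rightarrow> bool" where
  "ext_conv w e = (case e of
      Fin z \<Rightarrow> (w \<longlongrightarrow> z) sequentially
    | Dir z \<Rightarrow> z \<noteq> 0 \<and>
        (\<forall>t::real. \<forall>U. t > 0 \<and> ccb_nhd U \<longrightarrow>
           eventually (\<lambda>i. w i \<in> {t *\<^sub>R z + p | p. p \<in> pos_cone ((\<lambda>u. u + z) ` U)}) sequentially))"

definition dini :: "('x::real_vector \<Rightarrow> 'z::{real_vector,topological_space}) \<Rightarrow> 'x \<Rightarrow> 'x \<Rightarrow> 'z ext set" where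
  "dini \<psi> y v = {e. \<exists>s::nat \<Rightarrow> real. (\<forall>i. s i > 0) \<and> decseq s \<and> (s \<longlonglongrightarrow> 0) \<and>
        ext_conv (\<lambda>i. (1 / s i) *\<^sub>R (\<psi> (y + s i *\<^sub>R v) - \<psi> y)) e}"

definition fin_part :: "'z set \<Rightarrow> 'z ext set" where
  "fin_part A = Fin ` A"

definition inf_part :: "'z::zero set \<Rightarrow> 'z ext set" where
  "inf_part A = Dir ` (A - {0})"

end

theory Submission
  imports Defs
begin


context
  fixes dummy :: "'z::{real_vector,t2_space} itself"
  assumes LC: "lctvs TYPE('z)"
begin

lemma lc_add: "continuous_on A f \<Longrightarrow> continuous_on A g \<Longrightarrow> continuous_on A (\<lambda>x. f x + (g x::'z))"
proof -
  assume f: "continuous_on A f" and g: "continuous_on A g"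
  have a: "continuous_on UNIV (\<lambda>p::'z \<times> 'z. fst p + snd p)" using LC unfolding lctvs_def by blast
  show ?thesis using continuous_on_compose2[OF a continuous_on_Pair[OF f g]] by simp
qed

lemma lc_scale: "continuous_on A f \<Longrightarrow> continuous_on A g \<Longrightarrow> continuous_on A (\<lambda>x. f x *\<^sub>R (g x::'z))"
proof -
  assume f: "continuous_on A f" and g: "continuous_on A g"
  have a: "continuous_on UNIV (\<lambda>p::real \<times> 'z. fst p *\<^sub>R snd p)" using LC unfolding lctvs_def by blast
  show ?thesis using continuous_on_compose2[OF a continuous_on_Pair[OF f g]] by simp
qed

lemma lc_minus: "continuous_on A f \<Longrightarrow> continuous_on A g \<Longrightarrow> continuous_on A (\<lambda>x. f x - (g x::'z))"
proof -
  assume f: "continuous_on A f" and g: "continuous_on A g"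
  have "continuous_on A (\<lambda>x. f x + (-1::real) *\<^sub>R g x)"
    by (intro lc_add lc_scale f g continuous_on_const)
  then show ?thesis by simp
qed

lemma lc_closed_pre:
  assumes "closed T" "(w \<longlongrightarrow> (l::'z)) sequentially" "continuous_on UNIV g"
    "eventually (\<lambda>n. g (w n) \<in> T) sequentially"
  shows "g l \<in> T"
proof -
  have "closed (g -` T)" using assms closed_vimage by blast
  then have "l \<in> g -` T"
    by (rule Lim_in_closed_set[OF _ _ _ assms(2)]) (use assms(4) in auto)
  then show ?thesis by simp
qed

lemma ccb_exists:
  assumes "open Ob" "0 \<in> (Ob::'z set)"
  shows "\<exists>U. ccb_nhd U \<and> U \<subseteq> Ob"
proof -
  have cd: "continuous_on UNIV (\<lambda>p::'z\<times>'z. fst p - snd p)"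
    by (intro lc_minus continuous_on_fst continuous_on_snd continuous_on_id)
  have o1: "open ((\<lambda>p::'z\<times>'z. fst p - snd p) -` Ob)" by (rule open_vimage[OF assms(1) cd])
  have o2: "(0,0) \<in> (\<lambda>p::'z\<times>'z. fst p - snd p) -` Ob" using assms by simp
  obtain A B where AB: "open A" "open B" "(0,0) \<in> A \<times> B" "A \<times> B \<subseteq> (\<lambda>p::'z\<times>'z. fst p - snd p) -` Ob"
    by (rule open_prod_elim[OF o1 o2])
  define V where "V = A \<inter> B"
  have V: "open V" "0 \<in> V" "\<And>p q. p \<in> V \<Longrightarrow> q \<in> V \<Longrightarrow> p - q \<in> Ob"
  proof -
    show "open V" using AB unfolding V_def by blast
    show "0 \<in> V" using AB unfolding V_def by blast
    fix p q assume "p \<in> V" "q \<in> V"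
    then have "(p,q) \<in> A \<times> B" unfolding V_def by blast
    then show "p - q \<in> Ob" using AB(4) by auto
  qed
  have clV: "closure V \<subseteq> Ob"
  proof
    fix x assume x: "x \<in> closure V"
    have "open ((\<lambda>y. y - x) -` V)"
      by (intro open_vimage[OF V(1)] lc_minus continuous_on_id continuous_on_const)
    moreover have "x \<in> (\<lambda>y. y - x) -` V" using V by simp
    ultimately have "(\<lambda>y. y - x) -` V \<inter> closure V \<noteq> {}" using x by blast
    then have "(\<lambda>y. y - x) -` V \<inter> V \<noteq> {}"
      using open_Int_closure_eq_empty[OF \<open>open ((\<lambda>y. y - x) -` V)\<close>, of V] by simp
    then obtain y where "y \<in> V" "y - x \<in> V" by blast
    then have "y - (y - x) \<in> Ob" using V by blast
    then show "x \<in> Ob" by simp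
  qed
  obtain W where W: "open W" "convex W" "0 \<in> W" "W \<subseteq> V"
  proof -
    have "\<forall>U::'z set. open U \<and> 0 \<in> U \<longrightarrow> (\<exists>V. open V \<and> convex V \<and> 0 \<in> V \<and> V \<subseteq> U)"
      using LC unfolding lctvs_def by blast
    then show ?thesis using V(1,2) that by blast
  qed
  define W' where "W' = W \<inter> (\<lambda>u. - u) -` W"
  have oW': "open W'" unfolding W'_def
    apply (intro open_Int W open_vimage)
    using lc_scale[OF continuous_on_const continuous_on_id, of UNIV "-1"] by simp
  have cW': "convex W'" unfolding W'_def
    by (intro convex_Int W) (rule convex_linear_vimage[OF linear_uminus W(2)])
  have zW': "0 \<in> W'" using W unfolding W'_def by simp
  have bW': "(\<lambda>u. a *\<^sub>R u) ` W' \<subseteq> W'" if "\<bar>a\<bar> \<le> 1" for a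
  proof
    fix y assume "y \<in> (\<lambda>u. a *\<^sub>R u) ` W'"
    then obtain u where u: "u \<in> W'" "y = a *\<^sub>R u" by auto
    have "-u \<in> W'" using u unfolding W'_def by simp
    have "((1+a)/2) *\<^sub>R u + ((1-a)/2) *\<^sub>R (-u) \<in> W'"
      using cW' u(1) \<open>-u \<in> W'\<close> that unfolding convex_def by (auto simp: field_simps)
    moreover have "((1+a)/2) *\<^sub>R u + ((1-a)/2) *\<^sub>R (-u) = a *\<^sub>R u"
    proof -
      have "((1+a)/2) *\<^sub>R u + ((1-a)/2) *\<^sub>R (-u) = ((1+a)/2 - (1-a)/2) *\<^sub>R u"
        by (simp add: scaleR_diff_left)
      also have "(1+a)/2 - (1-a)/2 = a" by (simp add: field_simps)
      finally show ?thesis .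
    qed
    ultimately show "y \<in> W'" using u by simp
  qed
  define U where "U = closure W'"
  have "ccb_nhd U"
    unfolding ccb_nhd_def
  proof (intro conjI allI impI)
    show "\<exists>V. open V \<and> 0 \<in> V \<and> V \<subseteq> U" using oW' zW' closure_subset unfolding U_def by blast
    show "closed U" unfolding U_def by simp
    show "convex U" unfolding convex_def
    proof (intro ballI allI impI)
      fix x y u v assume xy: "x \<in> U" "y \<in> U" and uv: "0 \<le> (u::real)" "0 \<le> v" "u + v = 1"
      have cc: "continuous_on (closure (W' \<times> W')) (\<lambda>p. u *\<^sub>R fst p + v *\<^sub>R snd p)"
        by (intro lc_add lc_scale continuous_on_const continuous_on_fst continuous_on_snd continuous_on_id)
      have "(\<lambda>p. u *\<^sub>R fst p + v *\<^sub>R snd p) ` (W' \<times> W') \<subseteq> closure W'"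
      proof (rule subsetI)
        fix z assume "z \<in> (\<lambda>p. u *\<^sub>R fst p + v *\<^sub>R snd p) ` (W' \<times> W')"
        then obtain p q where "p \<in> W'" "q \<in> W'" "z = u *\<^sub>R p + v *\<^sub>R q" by auto
        then have "z \<in> W'" using cW' uv unfolding convex_def by blast
        then show "z \<in> closure W'" using closure_subset by blast
      qed
      from image_closure_subset[OF cc closed_closure this]
      have "(\<lambda>p. u *\<^sub>R fst p + v *\<^sub>R snd p) ` (closure W' \<times> closure W') \<subseteq> closure W'"
        by (simp add: closure_Times)
      moreover have "(x,y) \<in> closure W' \<times> closure W'" using xy unfolding U_def by blast
      ultimately show "u *\<^sub>R x + v *\<^sub>R y \<in> U" unfolding U_def
        using image_eqI[of "u *\<^sub>R x + v *\<^sub>R y" "\<lambda>p. u *\<^sub>R fst p + v *\<^sub>R snd p" "(x,y)"] by auto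
    qed
    fix a :: real assume a: "\<bar>a\<bar> \<le> 1"
    have cc: "continuous_on (closure W') (\<lambda>u. a *\<^sub>R u)"
      by (intro lc_scale continuous_on_const continuous_on_id)
    have "(\<lambda>u. a *\<^sub>R u) ` W' \<subseteq> closure W'" using bW'[OF a] closure_subset by blast
    from image_closure_subset[OF cc closed_closure this]
    show "(\<lambda>u. a *\<^sub>R u) ` U \<subseteq> U" unfolding U_def .
  qed
  moreover have "U \<subseteq> Ob"
  proof -
    have "W' \<subseteq> V" using W(4) unfolding W'_def by blast
    then show ?thesis using clV closure_mono[of W' V] unfolding U_def by blast
  qed
  ultimately show ?thesis by blast
qed


lemma dir_in:
  assumes D: "closed D" "cone D" and ec: "ext_conv w (Dir z)"
    and ev: "eventually (\<lambda>i. w i - a \<in> D) sequentially"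
  shows "(z::'z) \<in> D"
proof (rule ccontr)
  assume zD: "z \<notin> D"
  define Ob where "Ob = (\<lambda>v. z + v) -` (- D)"
  have oOb: "open Ob" unfolding Ob_def
    by (intro open_vimage lc_add continuous_on_const continuous_on_id) (use D in auto)
  have zOb: "0 \<in> Ob" using zD unfolding Ob_def by simp
  have ca: "continuous_on UNIV (\<lambda>p::'z\<times>'z. fst p + snd p)"
    by (intro lc_add continuous_on_fst continuous_on_snd continuous_on_id)
  have o1: "open ((\<lambda>p::'z\<times>'z. fst p + snd p) -` Ob)" by (rule open_vimage[OF oOb ca])
  have o2: "(0,0) \<in> (\<lambda>p::'z\<times>'z. fst p + snd p) -` Ob" using zOb by simp
  obtain A B where AB: "open A" "open B" "(0,0) \<in> A \<times> B" "A \<times> B \<subseteq> (\<lambda>p::'z\<times>'z. fst p + snd p) -` Ob"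
    by (rule open_prod_elim[OF o1 o2])
  define V where "V = A \<inter> B"
  have V: "open V" "0 \<in> V" "\<And>p q. p \<in> V \<Longrightarrow> q \<in> V \<Longrightarrow> p + q \<in> Ob"
  proof -
    show "open V" using AB unfolding V_def by blast
    show "0 \<in> V" using AB unfolding V_def by blast
    fix p q assume "p \<in> V" "q \<in> V"
    then have "(p,q) \<in> A \<times> B" unfolding V_def by blast
    then show "p + q \<in> Ob" using AB(4) by auto
  qed
  obtain U where U: "ccb_nhd U" "U \<subseteq> V" using ccb_exists[OF V(1,2)] by blast
  obtain V0 where V0: "open V0" "0 \<in> V0" "V0 \<subseteq> U" using U(1) unfolding ccb_nhd_def by blast
  have bal: "\<And>c u. \<bar>c\<bar> \<le> 1 \<Longrightarrow> u \<in> U \<Longrightarrow> c *\<^sub>R u \<in> U" using U(1) unfolding ccb_nhd_def by blast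
  have "open ((\<lambda>r::real. r *\<^sub>R (-a)) -` V0)"
    by (intro open_vimage[OF V0(1)] lc_scale continuous_on_id continuous_on_const)
  moreover have "(0::real) \<in> (\<lambda>r::real. r *\<^sub>R (-a)) -` V0" using V0 by simp
  ultimately obtain e where e: "e > 0" "ball 0 e \<subseteq> (\<lambda>r::real. r *\<^sub>R (-a)) -` V0"
    by (meson openE)
  define r where "r = e / 2"
  have r: "r > 0" "r *\<^sub>R (-a) \<in> U"
  proof -
    show "r > 0" using e unfolding r_def by simp
    have "r \<in> ball 0 e" using e unfolding r_def by simp
    then show "r *\<^sub>R (-a) \<in> U" using e V0 by blast
  qed
  have "\<forall>t::real. \<forall>U. t > 0 \<and> ccb_nhd U \<longrightarrow>
           eventually (\<lambda>i. w i \<in> {t *\<^sub>R z + p | p. p \<in> pos_cone ((\<lambda>u. u + z) ` U)}) sequentially"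
    using ec unfolding ext_conv_def by simp
  then have "eventually (\<lambda>i. w i \<in> {(1/r) *\<^sub>R z + p | p. p \<in> pos_cone ((\<lambda>u. u + z) ` U)}) sequentially"
    using r U by simp
  then obtain i where i1: "w i \<in> {(1/r) *\<^sub>R z + p | p. p \<in> pos_cone ((\<lambda>u. u + z) ` U)}"
    and i2: "w i - a \<in> D"
    using eventually_conj[OF _ ev] eventually_happens' trivial_limit_sequentially by blast
  then obtain s u where su: "s > 0" "u \<in> U" "w i = (1/r) *\<^sub>R z + s *\<^sub>R (u + z)"
    unfolding pos_cone_def by auto
  define k where "k = 1 / (1/r + s)"
  have pos: "1/r + s > 0" using r su by (simp add: add_pos_pos)
  have k: "k > 0" "k * (1/r + s) = 1" using pos unfolding k_def by auto
  have "k *\<^sub>R (w i - a) \<in> D" using D(2) i2 k unfolding cone_def by simp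
  moreover have "k *\<^sub>R (w i - a) = (k * (1/r + s)) *\<^sub>R z + ((k * s) *\<^sub>R u + (k/r) *\<^sub>R (r *\<^sub>R (-a)))"
    using r by (simp add: su algebra_simps)
  ultimately have "z + ((k * s) *\<^sub>R u + (k/r) *\<^sub>R (r *\<^sub>R (-a))) \<in> D" using k by simp
  moreover have "(k * s) *\<^sub>R u \<in> U"
  proof (rule bal[OF _ su(2)])
    have "k * s \<le> k * (1/r + s)" using k r by (intro mult_left_mono) auto
    then show "\<bar>k * s\<bar> \<le> 1" using k su by simp
  qed
  moreover have "(k/r) *\<^sub>R (r *\<^sub>R (-a)) \<in> U"
  proof (rule bal[OF _ r(2)])
    have "k * (1/r) \<le> k * (1/r + s)" using k su by (intro mult_left_mono) auto
    then show "\<bar>k/r\<bar> \<le> 1" using k r by simp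
  qed
  ultimately show False using V(3) U(2) unfolding Ob_def by blast
qed

lemma fin_mono:
  fixes Q :: "real \<Rightarrow> 'z"
  assumes C: "closed C" and T: "T > 0"
    and mono: "\<And>s s'. 0 < s \<Longrightarrow> s \<le> s' \<Longrightarrow> s' < T \<Longrightarrow> Q s' - Q s \<in> C"
    and sp: "\<And>i. \<sigma> i > 0" "\<And>i. \<sigma>' i > 0" and s0: "\<sigma> \<longlonglongrightarrow> 0" "\<sigma>' \<longlonglongrightarrow> 0"
    and l1: "(\<lambda>i. Q (\<sigma> i)) \<longlonglongrightarrow> z" and l2: "(\<lambda>i. Q (\<sigma>' i)) \<longlonglongrightarrow> w"
  shows "z - w \<in> C"
proof -
  have evT: "eventually (\<lambda>i. \<sigma> i < T) sequentially" using order_tendstoD(2)[OF s0(1) T] .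
  have "eventually (\<lambda>i. Q (\<sigma> i) - w \<in> C) sequentially"
    using evT
  proof (rule eventually_mono)
    fix i assume iT: "\<sigma> i < T"
    have "eventually (\<lambda>j. \<sigma>' j < \<sigma> i) sequentially" using order_tendstoD(2)[OF s0(2) sp(1)] .
    then have ev: "eventually (\<lambda>j. Q (\<sigma> i) - Q (\<sigma>' j) \<in> C) sequentially"
      by (rule eventually_mono) (use mono sp iT in auto)
    show "Q (\<sigma> i) - w \<in> C"
      by (rule lc_closed_pre[OF C l2, of "\<lambda>x. Q (\<sigma> i) - x"])
         (intro lc_minus continuous_on_const continuous_on_id, use ev in simp)
  qed
  then show ?thesis
    by (intro lc_closed_pre[OF C l1, of "\<lambda>x. x - w"] lc_minus continuous_on_const continuous_on_id) simp
qed

end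


lemma cone_add: "cone C \<Longrightarrow> convex C \<Longrightarrow> a \<in> C \<Longrightarrow> b \<in> C \<Longrightarrow> a + b \<in> C"
proof -
  assume c: "cone C" "convex C" "a \<in> C" "b \<in> C"
  have "(1/2::real) *\<^sub>R a + (1/2::real) *\<^sub>R b \<in> C" using c unfolding convex_def by auto
  then have "(2::real) *\<^sub>R ((1/2::real) *\<^sub>R a + (1/2::real) *\<^sub>R b) \<in> C" using c unfolding cone_def by auto
  then show ?thesis by (simp add: scaleR_add_right)
qed

lemma cone_scale: "cone C \<Longrightarrow> a \<in> C \<Longrightarrow> (k::real) \<ge> 0 \<Longrightarrow> k *\<^sub>R a \<in> C"
  unfolding cone_def by auto

lemma conv_ineq:
  assumes "C_convex C S \<psi>" "x1 \<in> S" "x2 \<in> S" "0 < t" "t < 1"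
  shows "(1 - t) *\<^sub>R \<psi> x1 + t *\<^sub>R \<psi> x2 - \<psi> (x1 + t *\<^sub>R (x2 - x1)) \<in> C"
proof -
  have "(1 - t) *\<^sub>R \<psi> x1 + t *\<^sub>R \<psi> x2 \<in> {\<psi> (x1 + t *\<^sub>R (x2 - x1)) + c | c. c \<in> C}"
    using assms unfolding C_convex_def by blast
  then obtain c where "c \<in> C" "(1 - t) *\<^sub>R \<psi> x1 + t *\<^sub>R \<psi> x2 = \<psi> (x1 + t *\<^sub>R (x2 - x1)) + c" by blast
  then show ?thesis by (simp add: algebra_simps)
qed

lemma seg_in: "convex S \<Longrightarrow> x0 \<in> S \<Longrightarrow> x \<in> S \<Longrightarrow> 0 \<le> r \<Longrightarrow> r \<le> 1 \<Longrightarrow> x0 + r *\<^sub>R (x - x0) \<in> S"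
proof -
  assume a: "convex S" "x0 \<in> S" "x \<in> S" "0 \<le> r" "r \<le> 1"
  have "(1-r) *\<^sub>R x0 + r *\<^sub>R x \<in> S" using a unfolding convex_def by auto
  moreover have "(1-r) *\<^sub>R x0 + r *\<^sub>R x = x0 + r *\<^sub>R (x - x0)" by (simp add: algebra_simps)
  ultimately show ?thesis by simp
qed

lemma Q_facts:
  fixes \<psi> :: "'x::real_vector \<Rightarrow> 'z::real_vector"
  assumes pc: "C_convex C S \<psi>" and Cc: "cone C" "convex C" "0 \<in> C"
    and x0S: "x0 \<in> S" and xS: "x \<in> S" and t: "0 < t" "t < 1"
  defines "y \<equiv> x0 + t *\<^sub>R (x - x0)"
  defines "Q \<equiv> (\<lambda>s. (1 / s) *\<^sub>R (\<psi> (y + s *\<^sub>R (x0 - x)) - \<psi> y))"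
  shows "\<And>s s'. 0 < s \<Longrightarrow> s \<le> s' \<Longrightarrow> s' \<le> t \<Longrightarrow> Q s' - Q s \<in> C"
    and "\<And>s. 0 < s \<Longrightarrow> s \<le> t \<Longrightarrow> Q s + (1 / (1 - t)) *\<^sub>R (\<psi> x - \<psi> y) \<in> C"
proof -
  have Sc: "convex S" using pc unfolding C_convex_def by blast
  have pt: "y + s *\<^sub>R (x0 - x) = x0 + (t - s) *\<^sub>R (x - x0)" for s
    unfolding y_def by (simp add: algebra_simps)
  have inS: "0 \<le> s \<Longrightarrow> s \<le> t \<Longrightarrow> y + s *\<^sub>R (x0 - x) \<in> S" for s
    unfolding pt using seg_in[OF Sc x0S xS, of "t - s"] t by simp
  have yS: "y \<in> S" using inS[of 0] t by simp
  fix s s' assume s: "0 < s" "s \<le> s'" "s' \<le> t"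
  show "Q s' - Q s \<in> C"
  proof (cases "s = s'")
    case True then show ?thesis using Cc by simp
  next
    case False
    then have ss: "s < s'" using s by simp
    define l where "l = s / s'"
    have l: "0 < l" "l < 1" using s ss unfolding l_def by auto
    have p2: "y + l *\<^sub>R ((y + s' *\<^sub>R (x0 - x)) - y) = y + s *\<^sub>R (x0 - x)"
      using s ss unfolding l_def by simp
    have "(1 - l) *\<^sub>R \<psi> y + l *\<^sub>R \<psi> (y + s' *\<^sub>R (x0 - x)) - \<psi> (y + s *\<^sub>R (x0 - x)) \<in> C"
    proof -
      have x2S: "y + s' *\<^sub>R (x0 - x) \<in> S" using inS[of s'] s by simp
      show ?thesis using conv_ineq[OF pc yS x2S l] unfolding p2 .
    qed
    then have "(1/s) *\<^sub>R ((1 - l) *\<^sub>R \<psi> y + l *\<^sub>R \<psi> (y + s' *\<^sub>R (x0 - x)) - \<psi> (y + s *\<^sub>R (x0 - x))) \<in> C"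
      using Cc s by (intro cone_scale) auto
    moreover have "(1/s) *\<^sub>R ((1 - l) *\<^sub>R \<psi> y + l *\<^sub>R \<psi> (y + s' *\<^sub>R (x0 - x)) - \<psi> (y + s *\<^sub>R (x0 - x))) = Q s' - Q s"
      unfolding Q_def l_def using s ss by (simp add: algebra_simps diff_divide_distrib scaleR_diff_left)
    ultimately show ?thesis by simp
  qed
next
  have Sc: "convex S" using pc unfolding C_convex_def by blast
  have pt: "y + s *\<^sub>R (x0 - x) = x0 + (t - s) *\<^sub>R (x - x0)" for s
    unfolding y_def by (simp add: algebra_simps)
  have inS: "0 \<le> s \<Longrightarrow> s \<le> t \<Longrightarrow> y + s *\<^sub>R (x0 - x) \<in> S" for s
    unfolding pt using seg_in[OF Sc x0S xS, of "t - s"] t by simp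
  fix s assume s: "0 < s" "s \<le> t"
  define l where "l = (1 - t) / ((1 - t) + s)"
  have l: "0 < l" "l < 1" using s t unfolding l_def by auto
  have d: "(y + s *\<^sub>R (x0 - x)) - x = ((1 - t) + s) *\<^sub>R (x0 - x)"
    unfolding y_def by (simp add: algebra_simps)
  have p2: "x + l *\<^sub>R ((y + s *\<^sub>R (x0 - x)) - x) = y"
  proof -
    have "l *\<^sub>R ((y + s *\<^sub>R (x0 - x)) - x) = (1 - t) *\<^sub>R (x0 - x)"
      unfolding d l_def using s t by simp
    then show ?thesis unfolding y_def by (simp add: algebra_simps)
  qed
  have "(1 - l) *\<^sub>R \<psi> x + l *\<^sub>R \<psi> (y + s *\<^sub>R (x0 - x)) - \<psi> y \<in> C"
  proof -
    have x2S: "y + s *\<^sub>R (x0 - x) \<in> S" using inS[of s] s by simp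
    show ?thesis using conv_ineq[OF pc xS x2S l] unfolding p2 .
  qed
  then have "(((1 - t) + s) / ((1 - t) * s)) *\<^sub>R ((1 - l) *\<^sub>R \<psi> x + l *\<^sub>R \<psi> (y + s *\<^sub>R (x0 - x)) - \<psi> y) \<in> C"
    using Cc s t by (intro cone_scale) auto
  moreover have "(((1 - t) + s) / ((1 - t) * s)) *\<^sub>R ((1 - l) *\<^sub>R \<psi> x + l *\<^sub>R \<psi> (y + s *\<^sub>R (x0 - x)) - \<psi> y)
      = Q s + (1 / (1 - t)) *\<^sub>R (\<psi> x - \<psi> y)"
    unfolding Q_def l_def using s t
    apply (simp add: scaleR_diff_right scaleR_add_right scaleR_diff_left)
    apply (simp add: field_simps)
    apply (subgoal_tac "(1 + s - t) / (s - s * t) = 1/s + 1/(1-t)")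
     apply (simp add: scaleR_add_left)
    apply (simp add: field_simps)
    done
  ultimately show "Q s + (1 / (1 - t)) *\<^sub>R (\<psi> x - \<psi> y) \<in> C" by simp
qed



lemma dini_E: "e \<in> dini \<psi> y v \<Longrightarrow> \<exists>\<sigma>. (\<forall>i. \<sigma> i > 0) \<and> (\<sigma> \<longlonglongrightarrow> 0) \<and> ext_conv (\<lambda>i. (1 / \<sigma> i) *\<^sub>R (\<psi> (y + \<sigma> i *\<^sub>R v) - \<psi> y)) e"
  unfolding dini_def by blast

theorem mainTheorem15:
  fixes C :: "'z::{real_vector,t2_space} set"
    and S :: "'x::real_vector set"
    and \<psi> :: "'x \<Rightarrow> 'z"
    and x0 :: 'x
  assumes Z_lc: "lctvs TYPE('z)"
    and C_closed: "closed C" and C_convex_set: "convex C" and C_cone: "cone C" and C_zero: "0 \<in> C"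
    and C_polar: "neg_polar C - {\<lambda>_. 0} \<noteq> {}"
    and psi_conv: "C_convex C S \<psi>"
    and x0S: "x0 \<in> S"
    and hyp: "\<And>x t. x \<in> S \<Longrightarrow> 0 < t \<Longrightarrow> t < 1 \<Longrightarrow>
               \<psi> (x0 + t *\<^sub>R (x - x0)) \<noteq> \<psi> x0 \<Longrightarrow>
               \<not> dini \<psi> (x0 + t *\<^sub>R (x - x0)) (x0 - x) \<subseteq> fin_part C \<union> inf_part C"
  shows "minty_sol (psiC C S \<psi>) x0 \<and>
         (\<forall>x\<in>S. \<forall>t. 0 < t \<and> t < 1 \<longrightarrow>
            \<psi> (x0 + t *\<^sub>R (x - x0)) \<noteq> \<psi> x0 \<longrightarrow>
            dini \<psi> (x0 + t *\<^sub>R (x - x0)) (x0 - x)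
              \<subseteq> inf_part (C \<inter> uminus ` C) \<union> fin_part (- C))"
proof
  have Sc: "convex S" using psi_conv unfolding C_convex_def by blast
  have dini_E: "\<exists>\<sigma>. (\<forall>i. \<sigma> i > 0) \<and> (\<sigma> \<longlonglongrightarrow> 0) \<and> ext_conv (\<lambda>i. (1 / \<sigma> i) *\<^sub>R (\<psi> (y + \<sigma> i *\<^sub>R v) - \<psi> y)) e"
    if "e \<in> dini \<psi> y v" for e y v
    using that unfolding dini_def by blast
  show "minty_sol (psiC C S \<psi>) x0"
    unfolding minty_sol_def
  proof (intro allI impI)
    fix x assume ne: "psiC C S \<psi> x \<noteq> psiC C S \<psi> x0"
    show "\<not> sv_deriv (psiC C S \<psi>) x (x0 - x) \<subseteq> rec_cone (psiC C S \<psi> x)"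
    proof (cases "x \<in> S")
      case False
      then have e: "psiC C S \<psi> x = {}" by (simp add: psiC_def)
      have "0 \<in> closure (convex hull (\<Union>t\<in>{t. 0 < t \<and> t < t0}. (\<lambda>z. (1 / t) *\<^sub>R z) ` mdiff (psiC C S \<psi> (x + t *\<^sub>R (x0 - x))) (psiC C S \<psi> x)))"
        if t0: "0 < t0" for t0 :: real
      proof -
        have "0 \<in> mdiff (psiC C S \<psi> (x + (t0/2) *\<^sub>R (x0 - x))) (psiC C S \<psi> x)"
          using e by (simp add: mdiff_def)
        then have "0 \<in> (\<lambda>z. (1 / (t0/2)) *\<^sub>R z) ` mdiff (psiC C S \<psi> (x + (t0/2) *\<^sub>R (x0 - x))) (psiC C S \<psi> x)"
          by (rule rev_image_eqI) simp
        then have "0 \<in> (\<Union>t\<in>{t. 0 < t \<and> t < t0}. (\<lambda>z. (1 / t) *\<^sub>R z) ` mdiff (psiC C S \<psi> (x + t *\<^sub>R (x0 - x))) (psiC C S \<psi> x))"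
          using t0 by (intro UN_I[of "t0/2"]) auto
        then show ?thesis by (meson closure_subset hull_inc subsetD)
      qed
      then have "0 \<in> sv_deriv (psiC C S \<psi>) x (x0 - x)" unfolding sv_deriv_def by blast
      moreover have "rec_cone (psiC C S \<psi> x) = {}" using e by (simp add: rec_cone_def)
      ultimately show ?thesis by blast
    next
      case True
      have fx: "psiC C S \<psi> x = {\<psi> x + c | c. c \<in> C}" using True by (simp add: psiC_def)
      have rc: "rec_cone (psiC C S \<psi> x) \<subseteq> C"
      proof
        fix z assume z: "z \<in> rec_cone (psiC C S \<psi> x)"
        have "psiC C S \<psi> x \<noteq> {}" using fx C_zero by blast
        then have "(\<lambda>a. a + z) ` psiC C S \<psi> x \<subseteq> psiC C S \<psi> x" using z by (simp add: rec_cone_def)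
        moreover have "\<psi> x + 0 \<in> psiC C S \<psi> x" using fx C_zero by blast
        ultimately have "\<psi> x + 0 + z \<in> psiC C S \<psi> x" by blast
        then obtain c where "c \<in> C" "\<psi> x + 0 + z = \<psi> x + c" using fx by blast
        then show "z \<in> C" by simp
      qed
      define P where "P r = (1/r) *\<^sub>R (\<psi> (x + r *\<^sub>R (x0 - x)) - \<psi> x)" for r
      have inD: "P r \<in> sv_deriv (psiC C S \<psi>) x (x0 - x)" if r: "0 < r" "r < 1" for r
      proof -
        have "P r \<in> closure (convex hull (\<Union>t\<in>{t. 0 < t \<and> t < t0}. (\<lambda>z. (1 / t) *\<^sub>R z) ` mdiff (psiC C S \<psi> (x + t *\<^sub>R (x0 - x))) (psiC C S \<psi> x)))"
          if t0: "0 < t0" for t0 :: real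
        proof -
          define s where "s = min t0 r / 2"
          have s: "0 < s" "s < t0" "s < r" using t0 r unfolding s_def by auto
          have sS: "x + s *\<^sub>R (x0 - x) \<in> S" using seg_in[OF Sc True x0S, of s] s r by simp
          have rS: "x + r *\<^sub>R (x0 - x) \<in> S" using seg_in[OF Sc True x0S, of r] r by simp
          define l where "l = s / r"
          have l: "0 < l" "l < 1" using s r unfolding l_def by auto
          have p2: "x + l *\<^sub>R ((x + r *\<^sub>R (x0 - x)) - x) = x + s *\<^sub>R (x0 - x)"
            using r unfolding l_def by simp
          have ci: "(1 - l) *\<^sub>R \<psi> x + l *\<^sub>R \<psi> (x + r *\<^sub>R (x0 - x)) - \<psi> (x + s *\<^sub>R (x0 - x)) \<in> C"
            using conv_ineq[OF psi_conv True rS l] unfolding p2 .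
          have eq: "(1 - l) *\<^sub>R \<psi> x + l *\<^sub>R \<psi> (x + r *\<^sub>R (x0 - x)) - \<psi> (x + s *\<^sub>R (x0 - x))
              = \<psi> x + s *\<^sub>R P r - \<psi> (x + s *\<^sub>R (x0 - x))"
            unfolding P_def l_def by (simp add: algebra_simps scaleR_diff_left)
          have "s *\<^sub>R P r \<in> mdiff (psiC C S \<psi> (x + s *\<^sub>R (x0 - x))) (psiC C S \<psi> x)"
            unfolding mdiff_def
          proof (clarify)
            fix b assume "b \<in> psiC C S \<psi> x"
            then obtain c where c: "c \<in> C" "b = \<psi> x + c" using fx by blast
            have "c + (\<psi> x + s *\<^sub>R P r - \<psi> (x + s *\<^sub>R (x0 - x))) \<in> C"
              using cone_add[OF C_cone C_convex_set c(1)] ci eq by simp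
            moreover have "b + s *\<^sub>R P r = \<psi> (x + s *\<^sub>R (x0 - x)) + (c + (\<psi> x + s *\<^sub>R P r - \<psi> (x + s *\<^sub>R (x0 - x))))"
              using c by (simp add: algebra_simps)
            moreover have "psiC C S \<psi> (x + s *\<^sub>R (x0 - x)) = {\<psi> (x + s *\<^sub>R (x0 - x)) + c | c. c \<in> C}"
              using sS by (simp add: psiC_def)
            ultimately show "b + s *\<^sub>R P r \<in> psiC C S \<psi> (x + s *\<^sub>R (x0 - x))"
              by blast
          qed
          then have "P r \<in> (\<lambda>z. (1 / s) *\<^sub>R z) ` mdiff (psiC C S \<psi> (x + s *\<^sub>R (x0 - x))) (psiC C S \<psi> x)"
            by (rule rev_image_eqI) (use s in simp)
          then have "P r \<in> (\<Union>t\<in>{t. 0 < t \<and> t < t0}. (\<lambda>z. (1 / t) *\<^sub>R z) ` mdiff (psiC C S \<psi> (x + t *\<^sub>R (x0 - x))) (psiC C S \<psi> x))"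
            using s by (intro UN_I[of s]) auto
          then show ?thesis by (meson closure_subset hull_inc subsetD)
        qed
        then show ?thesis unfolding sv_deriv_def by blast
      qed
      have ex: "\<exists>r. 0 < r \<and> r < 1 \<and> P r \<notin> C"
      proof (rule ccontr)
        assume "\<not> ?thesis"
        then have allC: "\<And>r. 0 < r \<Longrightarrow> r < 1 \<Longrightarrow> P r \<in> C" by blast
        have yeq: "x + (1/2::real) *\<^sub>R (x0 - x) = x0 + (1/2::real) *\<^sub>R (x - x0)"
        proof -
          have h: "(1/2::real) *\<^sub>R a + (1/2::real) *\<^sub>R a = a" for a :: 'x by (simp flip: scaleR_add_left)
          have "x + (1/2::real) *\<^sub>R (x0 - x) = ((1/2::real) *\<^sub>R x + (1/2::real) *\<^sub>R x) + (1/2::real) *\<^sub>R (x0 - x)" by (simp only: h)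
          also have "\<dots> = ((1/2::real) *\<^sub>R x0 + (1/2::real) *\<^sub>R x0) + (1/2::real) *\<^sub>R (x - x0)" by (simp add: algebra_simps)
          also have "\<dots> = x0 + (1/2::real) *\<^sub>R (x - x0)" by (simp only: h)
          finally show ?thesis .
        qed
        have P2: "P (1/2) = 2 *\<^sub>R (\<psi> (x0 + (1/2::real) *\<^sub>R (x - x0)) - \<psi> x)"
          unfolding P_def yeq by simp
        have P2C: "2 *\<^sub>R (\<psi> (x0 + (1/2::real) *\<^sub>R (x - x0)) - \<psi> x) \<in> C"
          using allC[of "1/2"] P2 by simp
        show False
        proof (cases "\<psi> (x0 + (1/2::real) *\<^sub>R (x - x0)) = \<psi> x0")
          case True
          have "(1/2::real) *\<^sub>R (2 *\<^sub>R (\<psi> x0 - \<psi> x)) \<in> C"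
            using cone_scale[OF C_cone, of "2 *\<^sub>R (\<psi> x0 - \<psi> x)" "1/2"] P2C True by simp
          then have d1: "\<psi> x0 - \<psi> x \<in> C" by simp
          have ci2: "(1 - 1/2) *\<^sub>R \<psi> x + (1/2::real) *\<^sub>R \<psi> x0 - \<psi> (x + (1/2::real) *\<^sub>R (x0 - x)) \<in> C"
            using conv_ineq[OF psi_conv \<open>x \<in> S\<close> x0S, of "1/2"] by simp
          have "(1/2::real) *\<^sub>R (\<psi> x - \<psi> x0) \<in> C"
          proof -
            have h: "(1/2::real) *\<^sub>R a + (1/2::real) *\<^sub>R a = a" for a :: 'z by (simp flip: scaleR_add_left)
            have "(1/2::real) *\<^sub>R \<psi> x + (1/2::real) *\<^sub>R \<psi> x0 - \<psi> x0 = (1/2::real) *\<^sub>R \<psi> x + (1/2::real) *\<^sub>R \<psi> x0 - ((1/2::real) *\<^sub>R \<psi> x0 + (1/2::real) *\<^sub>R \<psi> x0)"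
              by (simp only: h)
            also have "\<dots> = (1/2::real) *\<^sub>R (\<psi> x - \<psi> x0)" by (simp add: algebra_simps)
            finally show ?thesis using ci2[unfolded yeq True] by simp
          qed
          then have "(2::real) *\<^sub>R ((1/2::real) *\<^sub>R (\<psi> x - \<psi> x0)) \<in> C"
            by (rule cone_scale[OF C_cone]) simp
          then have d2: "\<psi> x - \<psi> x0 \<in> C" by simp
          have "psiC C S \<psi> x = psiC C S \<psi> x0"
          proof -
            have "{\<psi> x + c | c. c \<in> C} = {\<psi> x0 + c | c. c \<in> C}"
            proof (intro set_eqI iffI)
              fix z assume "z \<in> {\<psi> x + c | c. c \<in> C}"
              then obtain c where c: "c \<in> C" "z = \<psi> x + c" by blast
              have "(\<psi> x - \<psi> x0) + c \<in> C" using cone_add[OF C_cone C_convex_set d2 c(1)] .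
              moreover have "z = \<psi> x0 + ((\<psi> x - \<psi> x0) + c)" using c by simp
              ultimately show "z \<in> {\<psi> x0 + c | c. c \<in> C}" by blast
            next
              fix z assume "z \<in> {\<psi> x0 + c | c. c \<in> C}"
              then obtain c where c: "c \<in> C" "z = \<psi> x0 + c" by blast
              have "(\<psi> x0 - \<psi> x) + c \<in> C" using cone_add[OF C_cone C_convex_set d1 c(1)] .
              moreover have "z = \<psi> x + ((\<psi> x0 - \<psi> x) + c)" using c by simp
              ultimately show "z \<in> {\<psi> x + c | c. c \<in> C}" by blast
            qed
            then show ?thesis using \<open>x \<in> S\<close> x0S by (simp add: psiC_def)
          qed
          then show False using ne by simp
        next
          case False
          have h: "\<not> dini \<psi> (x0 + (1/2::real) *\<^sub>R (x - x0)) (x0 - x) \<subseteq> fin_part C \<union> inf_part C"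
            using hyp[OF \<open>x \<in> S\<close> _ _ False] by simp
          have "dini \<psi> (x0 + (1/2::real) *\<^sub>R (x - x0)) (x0 - x) \<subseteq> fin_part C \<union> inf_part C"
          proof
            fix e assume "e \<in> dini \<psi> (x0 + (1/2::real) *\<^sub>R (x - x0)) (x0 - x)"
            then obtain \<sigma> where \<sigma>: "\<forall>i. \<sigma> i > 0" "\<sigma> \<longlonglongrightarrow> 0"
              and ec: "ext_conv (\<lambda>i. (1 / \<sigma> i) *\<^sub>R (\<psi> (x0 + (1/2::real) *\<^sub>R (x - x0) + \<sigma> i *\<^sub>R (x0 - x)) - \<psi> (x0 + (1/2::real) *\<^sub>R (x - x0)))) e"
              using dini_E by blast
            have evs: "eventually (\<lambda>i. \<sigma> i < 1/2) sequentially"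
              using order_tendstoD(2)[OF \<sigma>(2), of "1/2"] by simp
            have QC: "(1 / s) *\<^sub>R (\<psi> (x0 + (1/2::real) *\<^sub>R (x - x0) + s *\<^sub>R (x0 - x)) - \<psi> (x0 + (1/2::real) *\<^sub>R (x - x0))) \<in> C"
              if s: "0 < s" "s \<le> 1/2" for s
            proof -
              have A: "(1 / s) *\<^sub>R (\<psi> (x0 + (1/2::real) *\<^sub>R (x - x0) + s *\<^sub>R (x0 - x)) - \<psi> (x0 + (1/2::real) *\<^sub>R (x - x0)))
                  + (1 / (1 - 1/2)) *\<^sub>R (\<psi> x - \<psi> (x0 + (1/2::real) *\<^sub>R (x - x0))) \<in> C"
                using Q_facts(2)[OF psi_conv C_cone C_convex_set C_zero x0S \<open>x \<in> S\<close>, of "1/2" s] s by simp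
              have B: "(1 / (1 - 1/2)) *\<^sub>R (\<psi> (x0 + (1/2::real) *\<^sub>R (x - x0)) - \<psi> x) \<in> C"
                using P2C by simp
              have "(1 / s) *\<^sub>R (\<psi> (x0 + (1/2::real) *\<^sub>R (x - x0) + s *\<^sub>R (x0 - x)) - \<psi> (x0 + (1/2::real) *\<^sub>R (x - x0)))
                  + (1 / (1 - 1/2)) *\<^sub>R (\<psi> x - \<psi> (x0 + (1/2::real) *\<^sub>R (x - x0)))
                  + (1 / (1 - 1/2)) *\<^sub>R (\<psi> (x0 + (1/2::real) *\<^sub>R (x - x0)) - \<psi> x) \<in> C"
                by (rule cone_add[OF C_cone C_convex_set A B])
              then show ?thesis by (simp add: algebra_simps)
            qed
            have evC: "eventually (\<lambda>i. (1 / \<sigma> i) *\<^sub>R (\<psi> (x0 + (1/2::real) *\<^sub>R (x - x0) + \<sigma> i *\<^sub>R (x0 - x)) - \<psi> (x0 + (1/2::real) *\<^sub>R (x - x0))) \<in> C) sequentially"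
              using evs by (rule eventually_mono) (use QC \<sigma>(1) in auto)
            show "e \<in> fin_part C \<union> inf_part C"
            proof (cases e)
              case (Fin z)
              then have "((\<lambda>i. (1 / \<sigma> i) *\<^sub>R (\<psi> (x0 + (1/2::real) *\<^sub>R (x - x0) + \<sigma> i *\<^sub>R (x0 - x)) - \<psi> (x0 + (1/2::real) *\<^sub>R (x - x0)))) \<longlongrightarrow> z) sequentially"
                using ec by (simp add: ext_conv_def)
              then have "z \<in> C"
                using lc_closed_pre[OF Z_lc C_closed _ continuous_on_id] evC by simp
              then show ?thesis using Fin by (simp add: fin_part_def)
            next
              case (Dir z)
              have "z \<noteq> 0" using ec Dir by (simp add: ext_conv_def)
              moreover have "z \<in> C"
                by (rule dir_in[OF Z_lc C_closed C_cone ec[unfolded Dir], of 0]) (use evC in simp)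
              ultimately show ?thesis using Dir by (simp add: inf_part_def)
            qed
          qed
          then show False using h by simp
        qed
      qed
      then obtain r where r: "0 < r" "r < 1" "P r \<notin> C" by blast
      then show ?thesis using inD[OF r(1,2)] rc by blast
    qed
  qed
next
  show "\<forall>x\<in>S. \<forall>t. 0 < t \<and> t < 1 \<longrightarrow>
            \<psi> (x0 + t *\<^sub>R (x - x0)) \<noteq> \<psi> x0 \<longrightarrow>
            dini \<psi> (x0 + t *\<^sub>R (x - x0)) (x0 - x)
              \<subseteq> inf_part (C \<inter> uminus ` C) \<union> fin_part (- C)"
  proof (intro ballI allI impI)
    fix x t assume xS: "x \<in> S" and t: "0 < t \<and> t < 1" and ne: "\<psi> (x0 + t *\<^sub>R (x - x0)) \<noteq> \<psi> x0"
    define y where "y = x0 + t *\<^sub>R (x - x0)"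
    define Q where "Q s = (1 / s) *\<^sub>R (\<psi> (y + s *\<^sub>R (x0 - x)) - \<psi> y)" for s
    have mono: "\<And>s s'. 0 < s \<Longrightarrow> s \<le> s' \<Longrightarrow> s' \<le> t \<Longrightarrow> Q s' - Q s \<in> C"
      using Q_facts(1)[OF psi_conv C_cone C_convex_set C_zero x0S xS, of t] t unfolding Q_def y_def by blast
    have low: "\<And>s. 0 < s \<Longrightarrow> s \<le> t \<Longrightarrow> Q s + (1 / (1 - t)) *\<^sub>R (\<psi> x - \<psi> y) \<in> C"
      using Q_facts(2)[OF psi_conv C_cone C_convex_set C_zero x0S xS, of t] t unfolding Q_def y_def by blast
    have negeq: "uminus ` C = (\<lambda>z::'z. - z) -` C"
    proof (rule set_eqI)
      fix z :: 'z
      show "z \<in> uminus ` C \<longleftrightarrow> z \<in> (\<lambda>z. - z) -` C"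
        by (simp add: image_iff) (metis minus_minus)
    qed
    have ncl: "closed (uminus ` C)"
    proof -
      have "continuous_on UNIV (\<lambda>z::'z. (-1::real) *\<^sub>R z)"
        by (intro lc_scale[OF Z_lc] continuous_on_const continuous_on_id)
      then have "continuous_on UNIV (\<lambda>z::'z. - z)" by simp
      then show ?thesis unfolding negeq by (rule closed_vimage[OF C_closed])
    qed
    have ncone: "cone (uminus ` C)"
      unfolding cone_def
    proof (intro ballI allI impI)
      fix z and c :: real assume "z \<in> uminus ` C" "0 \<le> c"
      then obtain a where "a \<in> C" "z = - a" by blast
      then have "c *\<^sub>R a \<in> C" using C_cone \<open>0 \<le> c\<close> unfolding cone_def by blast
      then show "c *\<^sub>R z \<in> uminus ` C" using \<open>z = - a\<close> by (intro rev_image_eqI[of "c *\<^sub>R a"]) auto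
    qed
    have dirC: "z \<in> C \<and> z \<in> uminus ` C"
      if \<sigma>: "\<forall>i. \<sigma> i > 0" "\<sigma> \<longlonglongrightarrow> 0" and ec: "ext_conv (\<lambda>i. Q (\<sigma> i)) (Dir z)" for \<sigma> z
    proof
      have evs: "eventually (\<lambda>i. \<sigma> i < t) sequentially"
        using order_tendstoD(2)[OF \<sigma>(2), of t] t by simp
      have "eventually (\<lambda>i. Q (\<sigma> i) - (- ((1 / (1 - t)) *\<^sub>R (\<psi> x - \<psi> y))) \<in> C) sequentially"
        using evs by (rule eventually_mono) (use low \<sigma>(1) in auto)
      then show "z \<in> C" by (rule dir_in[OF Z_lc C_closed C_cone ec])
      have "eventually (\<lambda>i. Q (\<sigma> i) - Q t \<in> uminus ` C) sequentially"
        using evs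
      proof (rule eventually_mono)
        fix i assume "\<sigma> i < t"
        then have "Q t - Q (\<sigma> i) \<in> C" using mono[of "\<sigma> i" t] \<sigma>(1) by simp
        then show "Q (\<sigma> i) - Q t \<in> uminus ` C" by (intro rev_image_eqI[of "Q t - Q (\<sigma> i)"]) auto
      qed
      then show "z \<in> uminus ` C" by (rule dir_in[OF Z_lc ncl ncone ec])
    qed
    have dE: "\<exists>\<sigma>. (\<forall>i. \<sigma> i > 0) \<and> (\<sigma> \<longlonglongrightarrow> 0) \<and> ext_conv (\<lambda>i. Q (\<sigma> i)) e"
      if "e \<in> dini \<psi> (x0 + t *\<^sub>R (x - x0)) (x0 - x)" for e
      using dini_E[OF that] unfolding Q_def y_def by blast
    show "dini \<psi> (x0 + t *\<^sub>R (x - x0)) (x0 - x) \<subseteq> inf_part (C \<inter> uminus ` C) \<union> fin_part (- C)"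
    proof
      fix e assume "e \<in> dini \<psi> (x0 + t *\<^sub>R (x - x0)) (x0 - x)"
      then obtain \<sigma> where \<sigma>: "\<forall>i. \<sigma> i > 0" "\<sigma> \<longlonglongrightarrow> 0" and ec: "ext_conv (\<lambda>i. Q (\<sigma> i)) e"
        using dE by blast
      show "e \<in> inf_part (C \<inter> uminus ` C) \<union> fin_part (- C)"
      proof (cases e)
        case (Dir z)
        have "z \<noteq> 0" using ec Dir by (simp add: ext_conv_def)
        then show ?thesis using dirC[OF \<sigma> ec[unfolded Dir]] Dir by (simp add: inf_part_def)
      next
        case (Fin z)
        have lz: "(\<lambda>i. Q (\<sigma> i)) \<longlonglongrightarrow> z" using ec Fin by (simp add: ext_conv_def)
        obtain e' where e': "e' \<in> dini \<psi> (x0 + t *\<^sub>R (x - x0)) (x0 - x)" "e' \<notin> fin_part C \<union> inf_part C"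
          using hyp[OF xS _ _ ne] t by blast
        then obtain \<sigma>' where \<sigma>': "\<forall>i. \<sigma>' i > 0" "\<sigma>' \<longlonglongrightarrow> 0" and ec': "ext_conv (\<lambda>i. Q (\<sigma>' i)) e'"
          using dE by blast
        show ?thesis
        proof (cases e')
          case (Dir w)
          have "w \<noteq> 0" using ec' Dir by (simp add: ext_conv_def)
          then have "e' \<in> inf_part C" using dirC[OF \<sigma>' ec'[unfolded Dir]] Dir by (simp add: inf_part_def)
          then show ?thesis using e' by blast
        next
          case (Fin w)
          have lw: "(\<lambda>i. Q (\<sigma>' i)) \<longlonglongrightarrow> w" using ec' Fin by (simp add: ext_conv_def)
          have wC: "w \<notin> C" using e' Fin unfolding fin_part_def by blast
          have "w - z \<in> C"
            by (rule fin_mono[OF Z_lc C_closed _ _ _ _ \<sigma>'(2) \<sigma>(2) lw lz, of t])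
               (use t mono \<sigma> \<sigma>' in auto)
          then have "z \<notin> C" using wC cone_add[OF C_cone C_convex_set, of "w - z" z] by auto
          then show ?thesis using \<open>e = Fin z\<close> by (simp add: fin_part_def)
        qed
      qed
    qed
  qed
qed

end
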